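(* Fix momenta $(p,p_\varphi)$ and suppose $P^+(r)=P^-(s)=0$ for non-zero integers $r,s$. Then the cohomology of $\hat d_0$ on the subspace of $\mathcal F_{p,p_\varphi}$ annihilated by $L_0=p^+p^-+\hat L_0$ is nonzero only if $rs>0$, and it is then spanned by the classes of the following states: (i) if $r,s<0$: $(\alpha^-_r)^{-s}|p,p_\varphi\rangle$ (ghost number $0$) and $\tilde b_r(\alpha^-_r)^{-s-1}|p,p_\varphi\rangle$ (ghost number $-1$); (ii) if $r,s>0$: $(\alpha^+_{-r})^{s}|p,p_\varphi\rangle$ (ghost number $0$) and $c_{-r}(\alpha^+_{-r})^{s-1}|p,p_\varphi\rangle$ (ghost number $+1$).
   Context: Oscillators ($n\ne0$): $\alpha^\pm_n=\frac1{\sqrt2}(x_n\pm i\varphi_n)$ with $[\alpha^\pm_m,\alpha^\mp_n]=m\delta_{m+n,0}$, $[\alpha^\pm_m,\alpha^\pm_n]=0$; fermionic $\tilde b_n,c_n$ with $\{\tilde b_m,c_n\}=\delta_{m+n,0}$; fermionic $\zeta_n,\tilde\eta_n$ with $\{\zeta_m,\tilde\eta_n\}=\delta_{m+n,0}$; bosonic $\beta_n,\gamma_n$ with $[\gamma_m,\beta_n]=\delta_{m+n,0}$; all other (anti)commutators zero. $\mathcal F_{p,p_\varphi}$ is the Fock space generated by these modes on the vacuum $|p,p_\varphi\rangle$, which is annihilated by all modes with positive index. $p^\pm=\frac1{\sqrt2}\big(p\pm i(p_\varphi+i\sqrt2)\big)$ and $P^\pm(n)=p^\pm\mp n$. $\hat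 L_0$ is the level operator (sum of $-n$ over creation modes with index $n<0$), with $\hat L_0|p,p_\varphi\rangle=0$; $L_0=p^+p^-+\hat L_0$. Ghost number: $c_n,\tilde\eta_n$ carry $+1$, $\tilde b_n,\zeta_n$ carry $-1$, all others $0$, vacuum $0$. The operator $\hat d_0=\sum_{n\ne0}\big(P^+(n)\,c_{-n}\alpha^-_n+\tilde\eta_n\beta_{-n}\big)$ preserves the level and is used as a differential on $\ker L_0$. *)

theory Defs
  imports Complex_Main
begin

text \<open>An operator is indexed by a family and an integer index n (n \<noteq> 0):
  Ap n = alpha^+_n, Am n = alpha^-_n, Bt n = b~_n, Cg n = c_n, Zt n = zeta_n,
  Et n = eta~_n, Be n = beta_n, Ga n = gamma_n.\<close>
datatype mode = Ap | Am | Bt | Cg | Zt | Et | Be | Ga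

fun fermionic :: "mode \<Rightarrow> bool" where
  "fermionic Bt = True" | "fermionic Cg = True" | "fermionic Zt = True" | "fermionic Et = True"
| "fermionic Ap = False" | "fermionic Am = False" | "fermionic Be = False" | "fermionic Ga = False"

fun ghost_charge :: "mode \<Rightarrow> int" where
  "ghost_charge Cg = 1" | "ghost_charge Et = 1" | "ghost_charge Bt = -1" | "ghost_charge Zt = -1"
| "ghost_charge Ap = 0" | "ghost_charge Am = 0" | "ghost_charge Be = 0" | "ghost_charge Ga = 0"

text \<open>Value of the (super)commutator [X_m, Y_n} of the modes, as given in the context:
  [a^+_m,a^-_n] = [a^-_m,a^+_n] = m delta_{m+n,0}; {b~_m,c_n} = {c_m,b~_n} = delta;
  {zeta_m,eta~_n} = {eta~_m,zeta_n} = delta; [gamma_m,beta_n] = delta, hence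
  [beta_m,gamma_n] = - delta; all others zero.\<close>
definition bracket :: "mode \<Rightarrow> int \<Rightarrow> mode \<Rightarrow> int \<Rightarrow> complex" where
  "bracket k m l n =
     (if m + n \<noteq> 0 then 0 else
      (case (k, l) of
         (Ap, Am) \<Rightarrow> of_int m | (Am, Ap) \<Rightarrow> of_int m
       | (Bt, Cg) \<Rightarrow> 1 | (Cg, Bt) \<Rightarrow> 1
       | (Zt, Et) \<Rightarrow> 1 | (Et, Zt) \<Rightarrow> 1
       | (Ga, Be) \<Rightarrow> 1 | (Be, Ga) \<Rightarrow> -1
       | _ \<Rightarrow> 0))"

definition supercomm :: "mode \<Rightarrow> mode \<Rightarrow> ('v::ab_group_add \<Rightarrow> 'v) \<Rightarrow> ('v \<Rightarrow> 'v) \<Rightarrow> 'v \<Rightarrow> 'v" where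
  "supercomm k l A B v = (if fermionic k \<and> fermionic l then A (B v) + B (A v) else A (B v) - B (A v))"

text \<open>Monomial state X1_{n1} X2_{n2} ... Xj_{nj} |vac> (first list element applied last).\<close>
definition mono :: "(mode \<Rightarrow> int \<Rightarrow> 'v \<Rightarrow> 'v) \<Rightarrow> 'v \<Rightarrow> (mode \<times> int) list \<Rightarrow> 'v" where
  "mono op vac ms = foldr (\<lambda>(k, n) v. op k n v) ms vac"

definition creation_list :: "(mode \<times> int) list \<Rightarrow> bool" where
  "creation_list ms \<longleftrightarrow> (\<forall>x \<in> set ms. snd x < 0)"

definition mono_level :: "(mode \<times> int) list \<Rightarrow> int" where
  "mono_level ms = sum_list (map (\<lambda>x. - snd x) ms)"

definition mono_ghost :: "(mode \<times> int) list \<Rightarrow> int" where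
  "mono_ghost ms = sum_list (map (\<lambda>x. ghost_charge (fst x)) ms)"

definition is_fock_space ::
  "(complex \<Rightarrow> 'v::ab_group_add \<Rightarrow> 'v) \<Rightarrow> (mode \<Rightarrow> int \<Rightarrow> 'v \<Rightarrow> 'v) \<Rightarrow> 'v \<Rightarrow> ('v \<Rightarrow> 'v) \<Rightarrow> bool"
where
  "is_fock_space sc op vac Lhat \<longleftrightarrow>
     vector_space sc
   \<and> (\<forall>k n. n \<noteq> 0 \<longrightarrow> Vector_Spaces.linear sc sc (op k n))
   \<and> (\<forall>k m l n v. m \<noteq> 0 \<longrightarrow> n \<noteq> 0 \<longrightarrow>
         supercomm k l (op k m) (op l n) v = sc (bracket k m l n) v)
   \<and> (\<forall>k n. n > 0 \<longrightarrow> op k n vac = 0)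
   \<and> module.span sc {mono op vac ms | ms. creation_list ms} = UNIV
   \<and> Vector_Spaces.linear sc sc Lhat
   \<and> (\<forall>ms. creation_list ms \<longrightarrow>
         Lhat (mono op vac ms) = sc (of_int (mono_level ms)) (mono op vac ms))"

definition p_plus :: "complex \<Rightarrow> complex \<Rightarrow> complex" where
  "p_plus p pphi = (p + \<i> * (pphi + \<i> * sqrt 2)) / sqrt 2"

definition p_minus :: "complex \<Rightarrow> complex \<Rightarrow> complex" where
  "p_minus p pphi = (p - \<i> * (pphi + \<i> * sqrt 2)) / sqrt 2"

definition Pp :: "complex \<Rightarrow> complex \<Rightarrow> int \<Rightarrow> complex" where
  "Pp p pphi n = p_plus p pphi - of_int n"

definition Pm :: "complex \<Rightarrow> complex \<Rightarrow> int \<Rightarrow> complex" where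
  "Pm p pphi n = p_minus p pphi + of_int n"

definition d0_term ::
  "(complex \<Rightarrow> 'v::ab_group_add \<Rightarrow> 'v) \<Rightarrow> (mode \<Rightarrow> int \<Rightarrow> 'v \<Rightarrow> 'v) \<Rightarrow> complex \<Rightarrow> complex \<Rightarrow> int \<Rightarrow> 'v \<Rightarrow> 'v"
where
  "d0_term sc op p pphi n v = sc (Pp p pphi n) (op Cg (-n) (op Am n v)) + op Et n (op Be (-n) v)"

text \<open>d0 v: the sum over the (on the Fock space finitely many) n \<noteq> 0 with non-zero term.\<close>
definition d0 ::
  "(complex \<Rightarrow> 'v::ab_group_add \<Rightarrow> 'v) \<Rightarrow> (mode \<Rightarrow> int \<Rightarrow> 'v \<Rightarrow> 'v) \<Rightarrow> complex \<Rightarrow> complex \<Rightarrow> 'v \<Rightarrow> 'v"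
where
  "d0 sc op p pphi v = (\<Sum>n \<in> {n. n \<noteq> 0 \<and> d0_term sc op p pphi n v \<noteq> 0}. d0_term sc op p pphi n v)"

definition kerL0 ::
  "(complex \<Rightarrow> 'v::ab_group_add \<Rightarrow> 'v) \<Rightarrow> ('v \<Rightarrow> 'v) \<Rightarrow> complex \<Rightarrow> complex \<Rightarrow> 'v set"
where
  "kerL0 sc Lhat p pphi = {v. sc (p_plus p pphi * p_minus p pphi) v + Lhat v = 0}"

end

theory Submission
  imports Defs
begin

lemma bracket_mixed: "fermionic k \<noteq> fermionic l \<Longrightarrow> bracket k m l n = 0"
  by (cases k; cases l; simp add: bracket_def)

lemma bracket_same: "bracket k m k n = 0"
  by (cases k; simp add: bracket_def)

lemma bracket_nz: "m + n \<noteq> 0 \<Longrightarrow> bracket k m l n = 0"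
  by (simp add: bracket_def)

lemma add_sum: "(\<And>x y. f (x + y) = f x + f y) \<Longrightarrow> f (sum g A) = (\<Sum>a\<in>A. (f (g a)::'b::ab_group_add))"
proof -
  assume h: "\<And>x y. f (x + y) = f x + f y"
  have "f 0 + f 0 = f 0 + 0" using h[of 0 0] by simp
  then have z: "f 0 = 0" by simp
  show ?thesis by (induct A rule: infinite_finite_induct) (simp_all add: z h)
qed

definition sgf :: "mode \<Rightarrow> mode \<Rightarrow> complex" where
  "sgf k l = (if fermionic k \<and> fermionic l then -1 else 1)"

locale fk =
  fixes sc :: "complex \<Rightarrow> 'v::ab_group_add \<Rightarrow> 'v"
    and op :: "mode \<Rightarrow> int \<Rightarrow> 'v \<Rightarrow> 'v"
    and vac :: 'v
    and Lhat :: "'v \<Rightarrow> 'v"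
  assumes fock: "is_fock_space sc op vac Lhat"
begin

lemmas f0 = fock[unfolded is_fock_space_def]
lemmas vs_ax = f0[THEN conjunct1]
lemmas op_lin0 = f0[THEN conjunct2, THEN conjunct1]
lemmas sup0 = f0[THEN conjunct2, THEN conjunct2, THEN conjunct1]
lemmas vac0 = f0[THEN conjunct2, THEN conjunct2, THEN conjunct2, THEN conjunct1]
lemmas span0 = f0[THEN conjunct2, THEN conjunct2, THEN conjunct2, THEN conjunct2, THEN conjunct1]
lemmas Llin0 = f0[THEN conjunct2, THEN conjunct2, THEN conjunct2, THEN conjunct2, THEN conjunct2, THEN conjunct1]
lemmas Lmono0 = f0[THEN conjunct2, THEN conjunct2, THEN conjunct2, THEN conjunct2, THEN conjunct2, THEN conjunct2]

sublocale vs: vector_space sc by (rule vs_ax)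

lemma op_lin: "n \<noteq> 0 \<Longrightarrow> Vector_Spaces.linear sc sc (op k n)"
  using op_lin0 by blast

lemma op_add[simp]: "n \<noteq> 0 \<Longrightarrow> op k n (x + y) = op k n x + op k n y"
  using op_lin[of n k] unfolding Vector_Spaces.linear_iff by auto

lemma op_sc[simp]: "n \<noteq> 0 \<Longrightarrow> op k n (sc a x) = sc a (op k n x)"
  using op_lin[of n k] unfolding Vector_Spaces.linear_iff by auto

lemma op_0[simp]: "n \<noteq> 0 \<Longrightarrow> op k n 0 = 0"
  using op_sc[of n k 0 0] by simp

lemma op_minus[simp]: "n \<noteq> 0 \<Longrightarrow> op k n (- x) = - op k n x"
  using op_sc[of n k "-1" x] by simp

lemma op_diff[simp]: "n \<noteq> 0 \<Longrightarrow> op k n (x - y) = op k n x - op k n y"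
  using op_add[of n k x "-y"] by simp

lemma op_sum: "n \<noteq> 0 \<Longrightarrow> op k n (sum g A) = (\<Sum>a\<in>A. op k n (g a))"
proof -
  assume "n \<noteq> 0"
  then show ?thesis by (intro add_sum) simp
qed

lemma L_lin: "Vector_Spaces.linear sc sc Lhat"
  by (rule Llin0)

lemma L_add[simp]: "Lhat (x + y) = Lhat x + Lhat y"
  using L_lin unfolding Vector_Spaces.linear_iff by auto

lemma L_sc[simp]: "Lhat (sc a x) = sc a (Lhat x)"
  using L_lin unfolding Vector_Spaces.linear_iff by auto

lemma L_0[simp]: "Lhat 0 = 0"
  using L_sc[of 0 0] by simp

lemma L_sum: "Lhat (sum g A) = (\<Sum>a\<in>A. Lhat (g a))"
  by (induct A rule: infinite_finite_induct) simp_all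

lemma comm: "m \<noteq> 0 \<Longrightarrow> n \<noteq> 0 \<Longrightarrow>
  op k m (op l n v) = sc (sgf k l) (op l n (op k m v)) + sc (bracket k m l n) v"
proof -
  assume a: "m \<noteq> 0" "n \<noteq> 0"
  have h: "supercomm k l (op k m) (op l n) v = sc (bracket k m l n) v"
    by (rule sup0[rule_format, OF a])
  show ?thesis
  proof (cases "fermionic k \<and> fermionic l")
    case True
    then have "op k m (op l n v) = sc (bracket k m l n) v - op l n (op k m v)"
      using h unfolding supercomm_def by (simp add: eq_diff_eq)
    then show ?thesis using True unfolding sgf_def by simp
  next
    case False
    then have "supercomm k l (op k m) (op l n) v = op k m (op l n v) - op l n (op k m v)"
      unfolding supercomm_def by auto
    then have "op k m (op l n v) = sc (bracket k m l n) v + op l n (op k m v)"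
      using h by (simp add: eq_diff_eq)
    moreover have "sgf k l = 1" using False by (simp add: sgf_def)
    ultimately show ?thesis by (simp add: add.commute)
  qed
qed

lemma vac_ann: "n > 0 \<Longrightarrow> op k n vac = 0"
  using vac0 by blast

lemma span_all: "vs.span {mono op vac ms | ms. creation_list ms} = UNIV"
  by (rule span0)

lemma L_mono: "creation_list ms \<Longrightarrow> Lhat (mono op vac ms) = sc (of_int (mono_level ms)) (mono op vac ms)"
  using Lmono0 by blast

lemma two_zero: "x + x = 0 \<Longrightarrow> x = (0::'v)"
proof -
  assume "x + x = 0"
  then have "sc 2 x = 0" using vs.scale_left_distrib[of 1 1 x] by simp
  then show ?thesis by simp
qed

lemma nilp: "fermionic k \<Longrightarrow> n \<noteq> 0 \<Longrightarrow> op k n (op k n v) = 0"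
proof -
  assume a: "fermionic k" "n \<noteq> 0"
  have "op k n (op k n v) = - op k n (op k n v)"
    using comm[of n n k k v] a by (simp add: sgf_def bracket_same)
  then have "op k n (op k n v) + op k n (op k n v) = 0"
    by (metis add.right_inverse)
  then show ?thesis by (rule two_zero)
qed

lemma commute0: "m \<noteq> 0 \<Longrightarrow> n \<noteq> 0 \<Longrightarrow> fermionic k \<noteq> fermionic l \<Longrightarrow>
  op k m (op l n v) = op l n (op k m v)"
proof -
  assume a: "m \<noteq> 0" "n \<noteq> 0" "fermionic k \<noteq> fermionic l"
  have "sgf k l = 1" "bracket k m l n = 0" using a(3) by (auto simp: sgf_def bracket_mixed)
  then show ?thesis using comm[OF a(1,2), of k l v] by simp
qed

lemma G4:
  assumes "fermionic kx" "\<not> fermionic ky" "fermionic kz" "\<not> fermionic kw"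
    and "nx \<noteq> 0" "ny \<noteq> 0" "nz \<noteq> 0" "nw \<noteq> 0"
  shows "op kx nx (op ky ny (op kz nz (op kw nw v))) + op kz nz (op kw nw (op kx nx (op ky ny v)))
     = sc (bracket kx nx kz nz) (op ky ny (op kw nw v)) + sc (bracket kw nw ky ny) (op kz nz (op kx nx v))"
proof -
  have 1: "op ky ny (op kz nz u) = op kz nz (op ky ny u)" for u
    using commute0 assms by auto
  have 2: "op kw nw (op kx nx u) = op kx nx (op kw nw u)" for u
    using commute0 assms by auto
  have 3: "op kx nx (op kz nz u) = - op kz nz (op kx nx u) + sc (bracket kx nx kz nz) u" for u
    using comm[of nx nz kx kz u] assms by (simp add: sgf_def)
  have 4: "op kw nw (op ky ny u) = op ky ny (op kw nw u) + sc (bracket kw nw ky ny) u" for u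
    using comm[of nw ny kw ky u] assms by (simp add: sgf_def)
  have e1: "op kx nx (op ky ny (op kz nz (op kw nw v))) =
     - op kz nz (op kx nx (op ky ny (op kw nw v))) + sc (bracket kx nx kz nz) (op ky ny (op kw nw v))"
    by (simp only: 1 3)
  have e2: "op kz nz (op kw nw (op kx nx (op ky ny v))) =
     op kz nz (op kx nx (op ky ny (op kw nw v))) + sc (bracket kw nw ky ny) (op kz nz (op kx nx v))"
    using assms by (simp add: 2 4)
  show ?thesis unfolding e1 e2 by (simp add: algebra_simps)
qed

lemma C3:
  assumes "fermionic ka = fermionic kb" "na \<noteq> 0" "nb \<noteq> 0" "nc \<noteq> 0"
  shows "op ka na (op kb nb (op kc nc v)) = op kc nc (op ka na (op kb nb v))
     + sc (sgf kb kc * bracket ka na kc nc) (op kb nb v) + sc (bracket kb nb kc nc) (op ka na v)"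
proof -
  have "op ka na (op kb nb (op kc nc v)) = op ka na (sc (sgf kb kc) (op kc nc (op kb nb v)) + sc (bracket kb nb kc nc) v)"
    using comm[of nb nc kb kc v] assms by simp
  also have "\<dots> = sc (sgf kb kc) (sc (sgf ka kc) (op kc nc (op ka na (op kb nb v))) + sc (bracket ka na kc nc) (op kb nb v))
       + sc (bracket kb nb kc nc) (op ka na v)"
    using comm[of na nc ka kc "op kb nb v"] assms by simp
  also have "\<dots> = sc (sgf kb kc * sgf ka kc) (op kc nc (op ka na (op kb nb v)))
      + sc (sgf kb kc * bracket ka na kc nc) (op kb nb v) + sc (bracket kb nb kc nc) (op ka na v)"
    by (simp add: vs.scale_right_distrib)
  also have "sgf kb kc * sgf ka kc = 1" using assms(1) by (simp add: sgf_def)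
  finally show ?thesis by simp
qed


lemma mono_Nil[simp]: "mono op vac [] = vac" by (simp add: mono_def)
lemma mono_Cons[simp]: "mono op vac ((k,n)#ms) = op k n (mono op vac ms)" by (simp add: mono_def)

end

lemma creation_Nil[simp]: "creation_list []" by (simp add: creation_list_def)
lemma creation_Cons[simp]: "creation_list ((k,n)#ms) \<longleftrightarrow> n < 0 \<and> creation_list ms"
  by (auto simp: creation_list_def)
lemma level_Nil[simp]: "mono_level [] = 0" by (simp add: mono_level_def)
lemma level_Cons[simp]: "mono_level ((k,n)#ms) = - n + mono_level ms" by (simp add: mono_level_def)
lemma level_nonneg: "creation_list ms \<Longrightarrow> mono_level ms \<ge> 0"
  by (induct ms) (auto)
lemma level_ge: "creation_list ms \<Longrightarrow> x \<in> set ms \<Longrightarrow> - snd x \<le> mono_level ms"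
  by (induct ms) (auto dest: level_nonneg)

lemma eig0:
  fixes T :: "'v::ab_group_add \<Rightarrow> 'v" and sc :: "complex \<Rightarrow> 'v \<Rightarrow> 'v"
  assumes vs: "vector_space sc"
    and Tsc: "\<And>a x. T (sc a x) = sc a (T x)" and Tadd: "\<And>x y. T (x + y) = T x + T y"
    and fin: "finite I"
  shows "(\<forall>i\<in>I. T (u i) = sc (\<mu> i) (u i) \<and> \<mu> i \<noteq> lm) \<Longrightarrow> T (sum u I) = sc lm (sum u I) \<Longrightarrow> sum u I = 0"
  using fin
proof (induct I arbitrary: u rule: finite_induct)
  case empty
  then show ?case by simp
next
  case (insert a J)
  interpret v: vector_space sc by (rule vs)
  have Tsum: "T (sum g A) = (\<Sum>i\<in>A. T (g i))" for g and A :: "'b set"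
    by (rule add_sum) (rule Tadd)
  define w where "w = u a + sum u J"
  have w: "sum u (insert a J) = w" using insert by (simp add: w_def)
  define u' where "u' i = sc (\<mu> i - \<mu> a) (u i)" for i
  have Tw: "T w = sc lm w" using insert(5) w by simp
  have Tua: "T (u a) = sc (\<mu> a) (u a)" using insert(4) by simp
  have s1: "sum u' J = T (sum u J) - sc (\<mu> a) (sum u J)"
    using insert(4) by (simp add: u'_def Tsum v.scale_left_diff_distrib sum_subtractf v.scale_sum_right)
  also have "\<dots> = sc (lm - \<mu> a) w"
  proof -
    have "T (sum u J) = T w - T (u a)" using Tadd[of "u a" "sum u J"] by (simp add: w_def)
    then show ?thesis using Tw Tua by (simp add: w_def v.scale_left_diff_distrib v.scale_right_distrib algebra_simps)
  qed
  finally have s2: "sum u' J = sc (lm - \<mu> a) w" .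
  have "sum u' J = 0"
  proof (rule insert(3))
    show "\<forall>i\<in>J. T (u' i) = sc (\<mu> i) (u' i) \<and> \<mu> i \<noteq> lm"
      using insert(4) by (auto simp: u'_def Tsc mult.commute)
    show "T (sum u' J) = sc lm (sum u' J)" unfolding s2 Tsc Tw by (simp add: mult.commute)
  qed
  then have "sc (lm - \<mu> a) w = 0" using s2 by simp
  moreover have "lm - \<mu> a \<noteq> 0" using insert(4) by auto
  ultimately show ?case using w by simp
qed

lemma eigproj:
  fixes T :: "'v::ab_group_add \<Rightarrow> 'v" and sc :: "complex \<Rightarrow> 'v \<Rightarrow> 'v"
  assumes vs: "vector_space sc"
    and Tsc: "\<And>a x. T (sc a x) = sc a (T x)" and Tadd: "\<And>x y. T (x + y) = T x + T y"
    and fin: "finite I"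
    and ev: "\<forall>i\<in>I. T (u i) = sc (\<mu> i) (u i)"
    and tot: "T (sum u I) = sc lm (sum u I)"
  shows "sum u I = sum u {i\<in>I. \<mu> i = lm}"
proof -
  interpret v: vector_space sc by (rule vs)
  have Tsum: "T (sum g A) = (\<Sum>i\<in>A. T (g i))" for g and A :: "'b set"
    by (rule add_sum) (rule Tadd)
  have split: "sum u I = sum u {i\<in>I. \<mu> i = lm} + sum u {i\<in>I. \<mu> i \<noteq> lm}"
    using fin by (rule sum.Int_Diff[where B = "{i. \<mu> i = lm}", THEN trans]) (auto intro!: arg_cong2[where f="(+)"] sum.cong)
  have T1: "T (sum u {i\<in>I. \<mu> i = lm}) = sc lm (sum u {i\<in>I. \<mu> i = lm})"
    using ev by (simp add: Tsum v.scale_sum_right)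
  have "T (sum u {i\<in>I. \<mu> i \<noteq> lm}) = sc lm (sum u {i\<in>I. \<mu> i \<noteq> lm})"
  proof -
    have "sum u {i\<in>I. \<mu> i \<noteq> lm} = sum u I - sum u {i\<in>I. \<mu> i = lm}" using split by simp
    moreover have "T (sum u I - sum u {i\<in>I. \<mu> i = lm}) = T (sum u I) - T (sum u {i\<in>I. \<mu> i = lm})"
      using Tadd[of "sum u I - sum u {i\<in>I. \<mu> i = lm}" "sum u {i\<in>I. \<mu> i = lm}"] by simp
    ultimately show ?thesis using tot T1 by (simp add: v.scale_right_diff_distrib)
  qed
  then have "sum u {i\<in>I. \<mu> i \<noteq> lm} = 0"
    by (intro eig0[OF vs Tsc Tadd]) (use fin ev in auto)
  then show ?thesis using split by simp
qed

context fk begin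

definition Mset :: "int \<Rightarrow> 'v set" where
  "Mset l = {mono op vac ms | ms. creation_list ms \<and> mono_level ms = l}"

lemma A1: "m < 0 \<Longrightarrow> x \<in> vs.span (Mset mu) \<Longrightarrow> op l m x \<in> vs.span (Mset (mu - m))"
proof -
  assume m: "m < 0" and x: "x \<in> vs.span (Mset mu)"
  from x show ?thesis
  proof (induct rule: vs.span_induct_alt)
    case base
    then show ?case using m by (simp add: vs.span_zero)
  next
    case (step c x y)
    then obtain ms where ms: "x = mono op vac ms" "creation_list ms" "mono_level ms = mu"
      unfolding Mset_def by auto
    have "op l m x \<in> Mset (mu - m)" unfolding Mset_def using ms m
      by (intro CollectI exI[of _ "(l,m)#ms"]) simp
    then show ?case using step m by (simp add: vs.span_add vs.span_scale vs.span_base)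
  qed
qed

lemma A2: "n > 0 \<Longrightarrow> creation_list ms \<Longrightarrow> op k n (mono op vac ms) \<in> vs.span (Mset (mono_level ms - n))"
proof (induct ms)
  case Nil
  then show ?case by (simp add: vac_ann vs.span_zero)
next
  case (Cons x ms)
  obtain l m where x: "x = (l,m)" by force
  have m: "m < 0" and cms: "creation_list ms" using Cons x by auto
  have e: "op k n (mono op vac (x#ms)) = sc (sgf k l) (op l m (op k n (mono op vac ms))) + sc (bracket k n l m) (mono op vac ms)"
    using comm[of n m k l] Cons m x by simp
  have 1: "op l m (op k n (mono op vac ms)) \<in> vs.span (Mset (mono_level (x#ms) - n))"
    using A1[OF m Cons(1)[OF Cons(2) cms], of l] x by (simp add: algebra_simps)
  have 2: "sc (bracket k n l m) (mono op vac ms) \<in> vs.span (Mset (mono_level (x#ms) - n))"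
  proof (cases "n + m = 0")
    case True
    then have "mono op vac ms \<in> Mset (mono_level (x#ms) - n)" unfolding Mset_def using cms x by auto
    then show ?thesis by (simp add: vs.span_scale vs.span_base)
  next
    case False
    then show ?thesis by (simp add: bracket_nz vs.span_zero)
  qed
  show ?case unfolding e using 1 2 by (simp add: vs.span_add vs.span_scale)
qed

lemma A3: "x \<in> vs.span (Mset mu) \<Longrightarrow> Lhat x = sc (of_int mu) x"
proof (induct rule: vs.span_induct_alt)
  case base
  then show ?case by simp
next
  case (step c x y)
  then obtain ms where ms: "x = mono op vac ms" "creation_list ms" "mono_level ms = mu"
    unfolding Mset_def by auto
  then show ?case using step L_mono[of ms] by (simp add: vs.scale_right_distrib mult.commute)
qed

lemma Amono: "n \<noteq> 0 \<Longrightarrow> creation_list ms \<Longrightarrow>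
   Lhat (op k n (mono op vac ms)) = sc (of_int (mono_level ms - n)) (op k n (mono op vac ms))"
proof -
  assume n: "n \<noteq> 0" and c: "creation_list ms"
  show ?thesis
  proof (cases "n < 0")
    case True
    then show ?thesis using L_mono[of "(k,n)#ms"] c by simp
  next
    case False
    then have "n > 0" using n by simp
    then show ?thesis using A3 A2 c by blast
  qed
qed

lemma Lcomm: "n \<noteq> 0 \<Longrightarrow> Lhat (op k n x) = op k n (Lhat x) - sc (of_int n) (op k n x)"
proof -
  assume n: "n \<noteq> 0"
  have "x \<in> vs.span {mono op vac ms | ms. creation_list ms}" using span_all by simp
  then show ?thesis
  proof (induct rule: vs.span_induct_alt)
    case base
    then show ?case using n by simp
  next
    case (step c x y)
    then obtain ms where ms: "x = mono op vac ms" "creation_list ms" by auto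
    have hx: "Lhat (op k n x) = op k n (Lhat x) - sc (of_int n) (op k n x)"
      using Amono[OF n ms(2), of k] L_mono[OF ms(2)] ms(1) n by (simp add: vs.scale_left_diff_distrib)
    have hy: "Lhat (op k n y) = op k n (Lhat y) - sc (of_int n) (op k n y)" by (rule step(2))
    show ?case using n by (simp add: hx hy vs.scale_right_diff_distrib algebra_simps)
  qed
qed

lemma op_eig: "n \<noteq> 0 \<Longrightarrow> Lhat x = sc mu x \<Longrightarrow> Lhat (op k n x) = sc (mu - of_int n) (op k n x)"
  using Lcomm[of n k x] by (simp add: vs.scale_left_diff_distrib)

lemma rep: "Lhat x = sc mu x \<Longrightarrow> \<exists>t r ms. finite t \<and> x = (\<Sum>a\<in>t. sc (r a) a) \<and>
   (\<forall>a\<in>t. a = mono op vac (ms a) \<and> creation_list (ms a) \<and> of_int (mono_level (ms a)) = mu)"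
proof -
  assume ev: "Lhat x = sc mu x"
  have "x \<in> vs.span {mono op vac ms | ms. creation_list ms}" using span_all by simp
  then obtain t r where t: "finite t" "t \<subseteq> {mono op vac ms | ms. creation_list ms}" "x = (\<Sum>a\<in>t. sc (r a) a)"
    unfolding vs.span_explicit by auto
  then have "\<forall>a\<in>t. \<exists>ms. a = mono op vac ms \<and> creation_list ms" by auto
  then obtain ms where ms: "\<forall>a\<in>t. a = mono op vac (ms a) \<and> creation_list (ms a)" by metis
  define mu' where "mu' a = (of_int (mono_level (ms a)) :: complex)" for a
  have evs: "\<forall>a\<in>t. Lhat (sc (r a) a) = sc (mu' a) (sc (r a) a)"
  proof
    fix a assume a: "a \<in> t"
    then have "Lhat a = sc (mu' a) a" using ms L_mono unfolding mu'_def by metis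
    then show "Lhat (sc (r a) a) = sc (mu' a) (sc (r a) a)" by (simp add: mult.commute)
  qed
  have "x = (\<Sum>a\<in>{a\<in>t. mu' a = mu}. sc (r a) a)"
    using eigproj[OF vs_ax L_sc L_add t(1) evs, of mu] ev t(3) by simp
  then show ?thesis using ms t(1) by (intro exI[of _ "{a\<in>t. mu' a = mu}"] exI[of _ r] exI[of _ ms]) (auto simp: mu'_def)
qed

lemma eig_neg: "Lhat x = sc (of_int k) x \<Longrightarrow> k < 0 \<Longrightarrow> x = 0"
proof -
  assume ev: "Lhat x = sc (of_int k) x" and k: "k < 0"
  obtain t r ms where t: "finite t" "x = (\<Sum>a\<in>t. sc (r a) a)"
    "\<forall>a\<in>t. a = mono op vac (ms a) \<and> creation_list (ms a) \<and> of_int (mono_level (ms a)) = (of_int k :: complex)"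
    using rep[OF ev] by blast
  have "t = {}"
  proof (rule ccontr)
    assume "t \<noteq> {}"
    then obtain a where a: "a \<in> t" by auto
    then have "mono_level (ms a) = k" using t(3) of_int_eq_iff by blast
    moreover have "mono_level (ms a) \<ge> 0" using t(3) a level_nonneg by blast
    ultimately show False using k by simp
  qed
  then show ?thesis using t by simp
qed


lemma level_const: "\<forall>x\<in>set ms. snd x = i \<Longrightarrow> mono_level ms = - i * int (length ms)"
  by (induct ms) (auto simp: algebra_simps)

lemma reorder:
  assumes i: "i < 0" and kb: "\<not> fermionic kb" and kf: "fermionic kf"
  shows "\<forall>x\<in>set ms. x = (kb,i) \<or> x = (kf,i) \<Longrightarrow>
    mono op vac ms = mono op vac (replicate (length ms) (kb,i))
  \<or> (length ms \<ge> 1 \<and> mono op vac ms = mono op vac ((kf,i) # replicate (length ms - 1) (kb,i)))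
  \<or> mono op vac ms = 0"
proof (induct ms)
  case Nil
  then show ?case by simp
next
  case (Cons x ms)
  have inz: "i \<noteq> 0" using i by simp
  have IH: "mono op vac ms = mono op vac (replicate (length ms) (kb,i))
    \<or> (length ms \<ge> 1 \<and> mono op vac ms = mono op vac ((kf,i) # replicate (length ms - 1) (kb,i)))
    \<or> mono op vac ms = 0" using Cons by auto
  have sw: "op kb i (op kf i y) = op kf i (op kb i y)" for y
    using commute0[OF inz inz, of kb kf] kb kf by simp
  have x: "x = (kb,i) \<or> x = (kf,i)" using Cons by auto
  then show ?case
  proof
    assume xb: "x = (kb,i)"
    from IH show ?thesis
    proof (elim disjE conjE)
      assume "mono op vac ms = mono op vac (replicate (length ms) (kb,i))"
      then show ?thesis using xb by simp
    next
      assume l: "length ms \<ge> 1" and e: "mono op vac ms = mono op vac ((kf,i) # replicate (length ms - 1) (kb,i))"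
      have "mono op vac (x#ms) = op kf i (op kb i (mono op vac (replicate (length ms - 1) (kb,i))))"
        using xb e by (simp add: sw)
      also have "\<dots> = mono op vac ((kf,i) # replicate (length (x#ms) - 1) (kb,i))"
        using l by (cases "length ms") auto
      finally show ?thesis by simp
    next
      assume "mono op vac ms = 0" then show ?thesis using xb inz by simp
    qed
  next
    assume xf: "x = (kf,i)"
    from IH show ?thesis
    proof (elim disjE conjE)
      assume "mono op vac ms = mono op vac (replicate (length ms) (kb,i))"
      then show ?thesis using xf by simp
    next
      assume e: "mono op vac ms = mono op vac ((kf,i) # replicate (length ms - 1) (kb,i))"
      have "mono op vac (x#ms) = 0" using xf e nilp[OF kf inz] by simp
      then show ?thesis by simp
    next
      assume "mono op vac ms = 0" then show ?thesis using xf inz by simp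
    qed
  qed
qed

lemma annih: "n > 0 \<Longrightarrow> creation_list ms \<Longrightarrow> (\<forall>x\<in>set ms. bracket k n (fst x) (snd x) = 0) \<Longrightarrow>
   op k n (mono op vac ms) = 0"
proof (induct ms)
  case Nil
  then show ?case by (simp add: vac_ann)
next
  case (Cons x ms)
  obtain l m where x: "x = (l,m)" by force
  have m: "m \<noteq> 0" "m < 0" using Cons x by auto
  have n: "n \<noteq> 0" using Cons by simp
  have cms: "creation_list ms" using Cons(3) x by simp
  have "op k n (mono op vac ms) = 0" using Cons(1)[OF Cons(2) cms] Cons(4) by simp
  moreover have "bracket k n l m = 0" using Cons(4) x by auto
  ultimately show ?case using comm[OF n m(1), of k l "mono op vac ms"] x m by simp
qed

end

locale fk1 = fk +
  fixes p pphi :: complex and r s :: int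
  assumes rnz: "r \<noteq> 0" and snz: "s \<noteq> 0"
    and Pr: "Pp p pphi r = 0" and Ps: "Pm p pphi s = 0"
begin

lemma pplus: "p_plus p pphi = of_int r" using Pr by (simp add: Pp_def)
lemma pminus: "p_minus p pphi = - of_int s" using Ps by (simp add: Pm_def eq_neg_iff_add_eq_0)
lemma Pp_eq: "Pp p pphi n = of_int (r - n)" by (simp add: Pp_def pplus)

lemma K_iff: "v \<in> kerL0 sc Lhat p pphi \<longleftrightarrow> Lhat v = sc (of_int (r * s)) v"
proof -
  have "v \<in> kerL0 sc Lhat p pphi \<longleftrightarrow> sc (- of_int (r*s)) v + Lhat v = 0"
    by (simp add: kerL0_def pplus pminus)
  also have "\<dots> \<longleftrightarrow> Lhat v = sc (of_int (r * s)) v"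
    by (auto simp: add_eq_0_iff2 eq_neg_iff_add_eq_0 add.commute)
  finally show ?thesis .
qed

abbreviation D where "D n v \<equiv> d0_term sc op p pphi n v"

lemma D_add[simp]: "n \<noteq> 0 \<Longrightarrow> D n (x + y) = D n x + D n y"
  by (simp add: d0_term_def vs.scale_right_distrib algebra_simps)
lemma D_sc[simp]: "n \<noteq> 0 \<Longrightarrow> D n (sc a x) = sc a (D n x)"
  by (simp add: d0_term_def vs.scale_right_distrib mult.commute)
lemma D_0[simp]: "n \<noteq> 0 \<Longrightarrow> D n 0 = 0"
  by (simp add: d0_term_def)
lemma D_sum: "n \<noteq> 0 \<Longrightarrow> D n (sum g A) = (\<Sum>a\<in>A. D n (g a))"
proof -
  assume "n \<noteq> 0" then show ?thesis by (intro add_sum) simp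
qed

definition bco :: "int \<Rightarrow> complex" where
  "bco n = (if n = r then 0 else 1 / (of_int \<bar>n\<bar> * Pp p pphi n))"

definition Hn where
  "Hn n v = sc (bco n) (op Bt n (op Ap (-n) v)) + sc (of_int (sgn n)) (op Zt (-n) (op Ga n v))"

definition Nn where
  "Nn n v = sc (Pp p pphi n * bco n) (op Am n (op Ap (-n) v) - sc (of_int n) (op Bt n (op Cg (-n) v)))
     + sc (of_int (sgn n)) (op Be (-n) (op Ga n v) + op Zt (-n) (op Et n v))"

lemma Hn_add[simp]: "n \<noteq> 0 \<Longrightarrow> Hn n (x + y) = Hn n x + Hn n y"
  by (simp add: Hn_def vs.scale_right_distrib algebra_simps)
lemma Hn_sc[simp]: "n \<noteq> 0 \<Longrightarrow> Hn n (sc a x) = sc a (Hn n x)"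
  by (simp add: Hn_def vs.scale_right_distrib mult.commute)
lemma Nn_add[simp]: "n \<noteq> 0 \<Longrightarrow> Nn n (x + y) = Nn n x + Nn n y"
  by (simp add: Nn_def vs.scale_right_distrib vs.scale_right_diff_distrib algebra_simps)
lemma Nn_sc[simp]: "n \<noteq> 0 \<Longrightarrow> Nn n (sc a x) = sc a (Nn n x)"
  by (simp add: Nn_def vs.scale_right_distrib vs.scale_right_diff_distrib mult.commute)

lemma AC: assumes n: "n \<noteq> 0" and m: "m \<noteq> 0"
  shows "D n (Hn m v) + Hn m (D n v) = (if n = m then Nn n v else 0)"
proof -
  let ?X = "op Cg (-n)" and ?Y = "op Am n" and ?X' = "op Et n" and ?Y' = "op Be (-n)"
  let ?Z = "op Bt m" and ?W = "op Ap (-m)" and ?Z' = "op Zt (-m)" and ?W' = "op Ga m"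
  have g1: "?X (?Y (?Z (?W v))) + ?Z (?W (?X (?Y v))) = sc (bracket Cg (-n) Bt m) (?Y (?W v)) + sc (bracket Ap (-m) Am n) (?Z (?X v))"
    by (rule G4) (use n m in auto)
  have g2: "?X (?Y (?Z' (?W' v))) + ?Z' (?W' (?X (?Y v))) = sc (bracket Cg (-n) Zt (-m)) (?Y (?W' v)) + sc (bracket Ga m Am n) (?Z' (?X v))"
    by (rule G4) (use n m in auto)
  have g3: "?X' (?Y' (?Z (?W v))) + ?Z (?W (?X' (?Y' v))) = sc (bracket Et n Bt m) (?Y' (?W v)) + sc (bracket Ap (-m) Be (-n)) (?Z (?X' v))"
    by (rule G4) (use n m in auto)
  have g4: "?X' (?Y' (?Z' (?W' v))) + ?Z' (?W' (?X' (?Y' v))) = sc (bracket Et n Zt (-m)) (?Y' (?W' v)) + sc (bracket Ga m Be (-n)) (?Z' (?X' v))"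
    by (rule G4) (use n m in auto)
  have e: "D n (Hn m v) + Hn m (D n v) =
      sc (Pp p pphi n * bco m) (?X (?Y (?Z (?W v))) + ?Z (?W (?X (?Y v))))
    + sc (Pp p pphi n * of_int (sgn m)) (?X (?Y (?Z' (?W' v))) + ?Z' (?W' (?X (?Y v))))
    + sc (bco m) (?X' (?Y' (?Z (?W v))) + ?Z (?W (?X' (?Y' v))))
    + sc (of_int (sgn m)) (?X' (?Y' (?Z' (?W' v))) + ?Z' (?W' (?X' (?Y' v))))"
    using n m by (simp add: d0_term_def Hn_def vs.scale_right_distrib mult.commute algebra_simps)
  show ?thesis
  proof (cases "n = m")
    case True
    then show ?thesis unfolding e g1 g2 g3 g4 using n
      by (simp add: bracket_def Nn_def vs.scale_right_distrib vs.scale_right_diff_distrib algebra_simps)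
  next
    case False
    then show ?thesis unfolding e g1 g2 g3 g4 using n m
      by (simp add: bracket_def)
  qed
qed

lemma DD: assumes n: "n \<noteq> 0" and m: "m \<noteq> 0"
  shows "D n (D m v) + D m (D n v) = 0"
proof -
  let ?X = "op Cg (-n)" and ?Y = "op Am n" and ?X' = "op Et n" and ?Y' = "op Be (-n)"
  let ?Z = "op Cg (-m)" and ?W = "op Am m" and ?Z' = "op Et m" and ?W' = "op Be (-m)"
  have g1: "?X (?Y (?Z (?W v))) + ?Z (?W (?X (?Y v))) = 0"
    using G4[of Cg Am Cg Am "-n" n "-m" m v] n m by (simp add: bracket_same)
  have g2: "?X (?Y (?Z' (?W' v))) + ?Z' (?W' (?X (?Y v))) = 0"
    using G4[of Cg Am Et Be "-n" n m "-m" v] n m by (simp add: bracket_def)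
  have g3: "?X' (?Y' (?Z (?W v))) + ?Z (?W (?X' (?Y' v))) = 0"
    using G4[of Et Be Cg Am n "-n" "-m" m v] n m by (simp add: bracket_def)
  have g4: "?X' (?Y' (?Z' (?W' v))) + ?Z' (?W' (?X' (?Y' v))) = 0"
    using G4[of Et Be Et Be n "-n" m "-m" v] n m by (simp add: bracket_same)
  have e: "D n (D m v) + D m (D n v) =
      sc (Pp p pphi n * Pp p pphi m) (?X (?Y (?Z (?W v))) + ?Z (?W (?X (?Y v))))
    + sc (Pp p pphi n) (?X (?Y (?Z' (?W' v))) + ?Z' (?W' (?X (?Y v))))
    + sc (Pp p pphi m) (?X' (?Y' (?Z (?W v))) + ?Z (?W (?X' (?Y' v))))
    + (?X' (?Y' (?Z' (?W' v))) + ?Z' (?W' (?X' (?Y' v))))"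
    using n m by (simp add: d0_term_def vs.scale_right_distrib mult.commute algebra_simps)
  show ?thesis unfolding e g1 g2 g3 g4 by simp
qed

end

locale fk2 = fk1 +
  assumes rspos: "r * s > 0"
begin

definition LL :: int where "LL = r * s"
definition F :: "int set" where "F = {n. n \<noteq> 0 \<and> - LL \<le> n \<and> n \<le> LL}"

lemma finF[simp]: "finite F"
proof -
  have "F \<subseteq> {-LL..LL}" by (auto simp: F_def)
  then show ?thesis using finite_subset by blast
qed

lemma F_nz: "n \<in> F \<Longrightarrow> n \<noteq> 0" by (simp add: F_def)

definition dF where "dF v = (\<Sum>n\<in>F. D n v)"
definition HF where "HF v = (\<Sum>n\<in>F. Hn n v)"
definition NF where "NF v = (\<Sum>n\<in>F. Nn n v)"

lemma dF_add[simp]: "dF (x + y) = dF x + dF y"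
  by (simp add: dF_def F_nz sum.distrib)
lemma dF_sc[simp]: "dF (sc a x) = sc a (dF x)"
  by (simp add: dF_def F_nz vs.scale_sum_right)
lemma HF_add[simp]: "HF (x + y) = HF x + HF y"
  by (simp add: HF_def F_nz sum.distrib)
lemma HF_sc[simp]: "HF (sc a x) = sc a (HF x)"
  by (simp add: HF_def F_nz vs.scale_sum_right)
lemma NF_add[simp]: "NF (x + y) = NF x + NF y"
  by (simp add: NF_def F_nz sum.distrib)
lemma NF_sc[simp]: "NF (sc a x) = sc a (NF x)"
  by (simp add: NF_def F_nz vs.scale_sum_right)
lemma dF_sum: "dF (sum g A) = (\<Sum>a\<in>A. dF (g a))" by (rule add_sum) simp
lemma HF_sum: "HF (sum g A) = (\<Sum>a\<in>A. HF (g a))" by (rule add_sum) simp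
lemma NF_sum: "NF (sum g A) = (\<Sum>a\<in>A. NF (g a))" by (rule add_sum) simp
lemma dF_0[simp]: "dF 0 = 0" using dF_sc[of 0 0] by simp
lemma HF_0[simp]: "HF 0 = 0" using HF_sc[of 0 0] by simp
lemma NF_0[simp]: "NF 0 = 0" using NF_sc[of 0 0] by simp

lemma homotopy: "dF (HF v) + HF (dF v) = NF v"
proof -
  have "dF (HF v) = (\<Sum>n\<in>F. \<Sum>m\<in>F. D n (Hn m v))"
    unfolding dF_def HF_def by (simp add: D_sum F_nz)
  moreover have "HF (dF v) = (\<Sum>n\<in>F. \<Sum>m\<in>F. Hn m (D n v))"
    unfolding dF_def HF_def by (simp add: Hn_def F_nz op_sum vs.scale_sum_right sum.distrib[symmetric]) (rule sum.swap)
  ultimately have "dF (HF v) + HF (dF v) = (\<Sum>n\<in>F. \<Sum>m\<in>F. D n (Hn m v) + Hn m (D n v))"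
    by (simp add: sum.distrib)
  also have "\<dots> = (\<Sum>n\<in>F. \<Sum>m\<in>F. if n = m then Nn n v else 0)"
    by (intro sum.cong refl) (simp add: AC F_nz)
  also have "\<dots> = NF v" by (simp add: NF_def)
  finally show ?thesis .
qed

lemma dFdF: "dF (dF v) = 0"
proof -
  define S where "S = (\<Sum>n\<in>F. \<Sum>m\<in>F. D n (D m v))"
  have S: "dF (dF v) = S" unfolding S_def dF_def by (simp add: D_sum F_nz)
  have "S = (\<Sum>n\<in>F. \<Sum>m\<in>F. - D m (D n v))"
    unfolding S_def
  proof (intro sum.cong refl)
    fix n m assume "n \<in> F" "m \<in> F"
    then have "D n (D m v) + D m (D n v) = 0" by (intro DD F_nz)
    then show "D n (D m v) = - D m (D n v)" by (rule add_eq_0_iff2[THEN iffD1])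
  qed
  also have "\<dots> = - (\<Sum>n\<in>F. \<Sum>m\<in>F. D m (D n v))" by (simp add: sum_negf)
  finally have S1: "S = - (\<Sum>n\<in>F. \<Sum>m\<in>F. D m (D n v))" .
  have "(\<Sum>n\<in>F. \<Sum>m\<in>F. D m (D n v)) = S" unfolding S_def by (rule sum.swap)
  then have "S = - S" using S1 by simp
  then have "S + S = S + - S" by (rule arg_cong)
  then have "S + S = 0" by simp
  then have "S = 0" by (rule two_zero)
  then show ?thesis using S by simp
qed

lemma dF_NF: "dF (NF x) = NF (dF x)"
  using homotopy[of x, symmetric] homotopy[of "dF x", symmetric] by (simp add: dFdF)


lemma opz: "Lhat x = sc (of_int LL) x \<Longrightarrow> n \<noteq> 0 \<Longrightarrow> LL - n < 0 \<Longrightarrow> op k n x = 0"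
proof -
  assume x: "Lhat x = sc (of_int LL) x" and n: "n \<noteq> 0" and l: "LL - n < 0"
  have "Lhat (op k n x) = sc (of_int (LL - n)) (op k n x)" using op_eig[OF n x] by simp
  then show ?thesis using eig_neg l by blast
qed

lemma D_out: assumes x: "Lhat x = sc (of_int LL) x" and n: "n \<noteq> 0" "n \<notin> F"
  shows "D n x = 0"
proof (cases "n > 0")
  case True
  then have l: "LL - n < 0" using n unfolding F_def by auto
  have 1: "op Am n x = 0" using opz[OF x n(1) l] .
  have 2: "op Et n (op Be (-n) x) = op Be (-n) (op Et n x)" using commute0 n by simp
  have 3: "op Et n x = 0" using opz[OF x n(1) l] .
  show ?thesis using n by (simp add: d0_term_def 1 2 3)
next
  case False
  then have l: "LL - (-n) < 0" using n unfolding F_def by auto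
  have n': "-n \<noteq> 0" using n by simp
  have 1: "op Cg (-n) (op Am n x) = op Am n (op Cg (-n) x)" using commute0 n by simp
  have 2: "op Cg (-n) x = 0" using opz[OF x n' l] .
  have 3: "op Be (-n) x = 0" using opz[OF x n' l] .
  show ?thesis using n by (simp add: d0_term_def 1 2 3)
qed

lemma d_eq: assumes x: "Lhat x = sc (of_int LL) x" shows "d0 sc op p pphi x = dF x"
proof -
  have "dF x = (\<Sum>n\<in>{n. n \<noteq> 0 \<and> D n x \<noteq> 0}. D n x)"
    unfolding dF_def
  proof (rule sum.mono_neutral_right)
    show "finite F" by simp
    show "{n. n \<noteq> 0 \<and> D n x \<noteq> 0} \<subseteq> F" using D_out[OF x] by blast
    show "\<forall>i\<in>F - {n. n \<noteq> 0 \<and> D n x \<noteq> 0}. D i x = 0" using F_nz by blast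
  qed
  then show ?thesis by (simp add: d0_def)
qed

lemma Eig_sub: "vs.subspace {x. Lhat x = sc mu x}"
  unfolding vs.subspace_def by (auto simp: vs.scale_right_distrib mult.commute)

lemma Hn_eig: "n \<noteq> 0 \<Longrightarrow> Lhat x = sc mu x \<Longrightarrow> Lhat (Hn n x) = sc mu (Hn n x)"
proof -
  assume n: "n \<noteq> 0" and x: "Lhat x = sc mu x"
  have n': "-n \<noteq> 0" using n by simp
  have a: "Lhat (op Bt n (op Ap (-n) x)) = sc mu (op Bt n (op Ap (-n) x))"
    using op_eig[OF n op_eig[OF n' x]] by simp
  have b: "Lhat (op Zt (-n) (op Ga n x)) = sc mu (op Zt (-n) (op Ga n x))"
    using op_eig[OF n' op_eig[OF n x]] by simp
  show ?thesis unfolding Hn_def using a b by (simp add: vs.scale_right_distrib mult.commute)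
qed

lemma HF_eig: "Lhat x = sc mu x \<Longrightarrow> Lhat (HF x) = sc mu (HF x)"
  unfolding HF_def using Hn_eig F_nz vs.subspace_sum[OF Eig_sub[of mu], of F "\<lambda>n. Hn n x"] by auto

definition ch :: "mode \<Rightarrow> int \<Rightarrow> complex" where
  "ch k c = (if ((k = Ap \<or> k = Cg) \<and> c = -r) \<or> ((k = Am \<or> k = Bt) \<and> c = r) then 0 else 1)"

definition chn :: "int \<Rightarrow> mode \<Rightarrow> int \<Rightarrow> complex" where
  "chn n k c = (case k of
      Ap \<Rightarrow> if n = -c then Pp p pphi n * bco n * of_int n else 0
    | Am \<Rightarrow> if n = c then -(Pp p pphi n * bco n * of_int n) else 0
    | Cg \<Rightarrow> if n = -c then Pp p pphi n * bco n * of_int n else 0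
    | Bt \<Rightarrow> if n = c then -(Pp p pphi n * bco n * of_int n) else 0
    | Ga \<Rightarrow> if n = c then - of_int (sgn n) else 0
    | Be \<Rightarrow> if n = -c then of_int (sgn n) else 0
    | Et \<Rightarrow> if n = c then - of_int (sgn n) else 0
    | Zt \<Rightarrow> if n = -c then of_int (sgn n) else 0)"

lemma Nn_comm: assumes n: "n \<noteq> 0" and c: "c \<noteq> 0"
  shows "Nn n (op k c x) = op k c (Nn n x) + sc (chn n k c) (op k c x)"
proof -
  have n': "-n \<noteq> 0" using n by simp
  let ?w = "Pp p pphi n * bco n"
  have c1: "op Am n (op Ap (-n) (op k c x)) = op k c (op Am n (op Ap (-n) x)) + sc (sgf Ap k * bracket Am n k c) (op Ap (-n) x) + sc (bracket Ap (-n) k c) (op Am n x)"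
    by (rule C3) (use n c in auto)
  have c2: "op Bt n (op Cg (-n) (op k c x)) = op k c (op Bt n (op Cg (-n) x)) + sc (sgf Cg k * bracket Bt n k c) (op Cg (-n) x) + sc (bracket Cg (-n) k c) (op Bt n x)"
    by (rule C3) (use n c in auto)
  have c3: "op Be (-n) (op Ga n (op k c x)) = op k c (op Be (-n) (op Ga n x)) + sc (sgf Ga k * bracket Be (-n) k c) (op Ga n x) + sc (bracket Ga n k c) (op Be (-n) x)"
    by (rule C3) (use n c in auto)
  have c4: "op Zt (-n) (op Et n (op k c x)) = op k c (op Zt (-n) (op Et n x)) + sc (sgf Et k * bracket Zt (-n) k c) (op Et n x) + sc (bracket Et n k c) (op Zt (-n) x)"
    by (rule C3) (use n c in auto)
  define E where "E = sc ?w (sc (sgf Ap k * bracket Am n k c) (op Ap (-n) x) + sc (bracket Ap (-n) k c) (op Am n x)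
     - sc (of_int n) (sc (sgf Cg k * bracket Bt n k c) (op Cg (-n) x) + sc (bracket Cg (-n) k c) (op Bt n x)))
     + sc (of_int (sgn n)) (sc (sgf Ga k * bracket Be (-n) k c) (op Ga n x) + sc (bracket Ga n k c) (op Be (-n) x)
         + sc (sgf Et k * bracket Zt (-n) k c) (op Et n x) + sc (bracket Et n k c) (op Zt (-n) x))"
  have e: "Nn n (op k c x) = op k c (Nn n x) + E"
    unfolding Nn_def c1 c2 c3 c4 E_def using n c
    by (simp add: vs.scale_right_distrib vs.scale_right_diff_distrib algebra_simps)
  have "E = sc (chn n k c) (op k c x)"
  proof (cases k)
    case Ap
    then show ?thesis unfolding E_def chn_def
      by (cases "c = -n") (auto simp: bracket_def sgf_def)
  next
    case Am
    then show ?thesis unfolding E_def chn_def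
      by (cases "c = n") (auto simp: bracket_def sgf_def)
  next
    case Bt
    then show ?thesis unfolding E_def chn_def
      by (cases "c = n") (auto simp: bracket_def sgf_def)
  next
    case Cg
    then show ?thesis unfolding E_def chn_def
      by (cases "c = -n") (auto simp: bracket_def sgf_def)
  next
    case Zt
    then show ?thesis unfolding E_def chn_def
      by (cases "c = -n") (auto simp: bracket_def sgf_def)
  next
    case Et
    then show ?thesis unfolding E_def chn_def
      by (cases "c = n") (auto simp: bracket_def sgf_def)
  next
    case Be
    then show ?thesis unfolding E_def chn_def
      by (cases "c = -n") (auto simp: bracket_def sgf_def)
  next
    case Ga
    then show ?thesis unfolding E_def chn_def
      by (cases "c = n") (auto simp: bracket_def sgf_def)
  qed
  then show ?thesis using e by simp
qed


lemma NF_comm: "c \<noteq> 0 \<Longrightarrow> NF (op k c x) = op k c (NF x) + sc (\<Sum>n\<in>F. chn n k c) (op k c x)"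
  unfolding NF_def by (simp add: Nn_comm F_nz sum.distrib op_sum vs.scale_sum_left)

lemma bco_val: "n \<noteq> 0 \<Longrightarrow> Pp p pphi n * bco n * of_int n = (if n = r then 0 else of_int (sgn n))"
proof -
  assume n: "n \<noteq> 0"
  show ?thesis
  proof (cases "n = r")
    case True then show ?thesis by (simp add: bco_def)
  next
    case False
    then have pz: "Pp p pphi n \<noteq> 0" by (simp add: Pp_eq)
    have "of_int n = (of_int (sgn n) * of_int \<bar>n\<bar> :: complex)"
      by (metis of_int_mult sgn_mult_abs)
    then show ?thesis using False pz n by (simp add: bco_def field_simps)
  qed
qed

lemma chsum: assumes c: "c < 0" "- c \<le> LL" shows "(\<Sum>n\<in>F. chn n k c) = ch k c"
proof -
  have F1: "-c \<in> F" and F2: "c \<in> F" using c by (auto simp: F_def)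
  have sA: "(\<Sum>n\<in>F. if n = -c then g n else 0) = g (-c)" for g :: "int \<Rightarrow> complex"
    using F1 by (simp add: sum.delta)
  have sB: "(\<Sum>n\<in>F. if n = c then g n else 0) = g c" for g :: "int \<Rightarrow> complex"
    using F2 by (simp add: sum.delta)
  have cnz: "c \<noteq> 0" "-c \<noteq> 0" using c by auto
  show ?thesis
    by (cases k) (simp_all only: chn_def mode.case sA sB bco_val[OF cnz(1)] bco_val[OF cnz(2)],
        (use c in \<open>auto simp: ch_def\<close>))
qed

lemma Nn_vac: "n \<noteq> 0 \<Longrightarrow> Nn n vac = 0"
proof -
  assume n: "n \<noteq> 0"
  have n': "-n \<noteq> 0" using n by simp
  show ?thesis
  proof (cases "n > 0")
    case True
    have 1: "op Am n (op Ap (-n) vac) = sc (of_int n) vac"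
      using comm[OF n n', of Am Ap vac] True by (simp add: vac_ann sgf_def bracket_def)
    have 2: "op Bt n (op Cg (-n) vac) = vac"
      using comm[OF n n', of Bt Cg vac] True by (simp add: vac_ann sgf_def bracket_def)
    show ?thesis unfolding Nn_def using True by (simp add: 1 2 vac_ann)
  next
    case False
    then have nn: "-n > 0" using n by simp
    have 1: "op Be (-n) (op Ga n vac) = - vac"
      using comm[OF n' n, of Be Ga vac] nn by (simp add: vac_ann sgf_def bracket_def)
    have 2: "op Zt (-n) (op Et n vac) = vac"
      using comm[OF n' n, of Zt Et vac] nn by (simp add: vac_ann sgf_def bracket_def)
    show ?thesis unfolding Nn_def using nn by (simp add: 1 2 vac_ann)
  qed
qed

lemma NF_vac: "NF vac = 0" unfolding NF_def by (simp add: Nn_vac F_nz)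

definition Qm :: "(mode \<times> int) list \<Rightarrow> complex" where
  "Qm ms = sum_list (map (\<lambda>x. ch (fst x) (snd x)) ms)"

lemma NF_mono: "creation_list ms \<Longrightarrow> (\<forall>x\<in>set ms. - snd x \<le> LL) \<Longrightarrow>
   NF (mono op vac ms) = sc (Qm ms) (mono op vac ms)"
proof (induct ms)
  case Nil
  then show ?case by (simp add: NF_vac Qm_def)
next
  case (Cons x ms)
  obtain k c where x: "x = (k,c)" by force
  have c: "c < 0" "-c \<le> LL" using Cons x by auto
  have IH: "NF (mono op vac ms) = sc (Qm ms) (mono op vac ms)" using Cons x by auto
  show ?case using c x IH by (simp add: NF_comm chsum Qm_def vs.scale_left_distrib add.commute)
qed


lemma Qm_nat: "Qm ms = of_nat (length (filter (\<lambda>x. ch (fst x) (snd x) \<noteq> 0) ms))"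
  by (induct ms) (auto simp: Qm_def ch_def)

lemma Qm_zero: "Qm ms = 0 \<Longrightarrow> \<forall>x\<in>set ms. ch (fst x) (snd x) = 0"
  unfolding Qm_nat by (simp add: filter_empty_conv)

definition ms1 where "ms1 = (if r < 0 then replicate (nat (-s)) (Am, r) else replicate (nat s) (Ap, -r))"
definition ms2 where "ms2 = (if r < 0 then (Bt, r) # replicate (nat (-s - 1)) (Am, r)
   else (Cg, -r) # replicate (nat (s - 1)) (Ap, -r))"
definition PP where "PP = {x. \<exists>a b. x = sc a (mono op vac ms1) + sc b (mono op vac ms2)}"

lemma PP_sub: "vs.subspace PP"
  unfolding vs.subspace_def PP_def
proof (intro conjI allI ballI impI)
  show "0 \<in> {x. \<exists>a b. x = sc a (mono op vac ms1) + sc b (mono op vac ms2)}"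
    by (auto intro!: exI[of _ 0])
next
  fix x y assume "x \<in> {x. \<exists>a b. x = sc a (mono op vac ms1) + sc b (mono op vac ms2)}"
    "y \<in> {x. \<exists>a b. x = sc a (mono op vac ms1) + sc b (mono op vac ms2)}"
  then obtain a b a' b' where "x = sc a (mono op vac ms1) + sc b (mono op vac ms2)"
    "y = sc a' (mono op vac ms1) + sc b' (mono op vac ms2)" by auto
  then have "x + y = sc (a + a') (mono op vac ms1) + sc (b + b') (mono op vac ms2)"
    by (simp add: vs.scale_left_distrib algebra_simps)
  then show "x + y \<in> {x. \<exists>a b. x = sc a (mono op vac ms1) + sc b (mono op vac ms2)}"
    by blast
next
  fix c x assume "x \<in> {x. \<exists>a b. x = sc a (mono op vac ms1) + sc b (mono op vac ms2)}"
  then obtain a b where "x = sc a (mono op vac ms1) + sc b (mono op vac ms2)" by auto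
  then have "sc c x = sc (c * a) (mono op vac ms1) + sc (c * b) (mono op vac ms2)"
    by (simp add: vs.scale_right_distrib)
  then show "sc c x \<in> {x. \<exists>a b. x = sc a (mono op vac ms1) + sc b (mono op vac ms2)}"
    by blast
qed

lemma free_span:
  assumes cr: "creation_list ms" and lv: "mono_level ms = LL" and fr: "\<forall>x\<in>set ms. ch (fst x) (snd x) = 0"
  shows "mono op vac ms \<in> PP"
proof -
  have m1: "sc 1 (mono op vac ms1) + sc 0 (mono op vac ms2) \<in> PP" unfolding PP_def by blast
  have m2: "sc 0 (mono op vac ms1) + sc 1 (mono op vac ms2) \<in> PP" unfolding PP_def by blast
  have m0: "0 \<in> PP" using PP_sub vs.subspace_0 by blast
  have neg: "\<forall>x\<in>set ms. snd x < 0" using cr by (simp add: creation_list_def)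
  show ?thesis
  proof (cases "r < 0")
    case True
    then have sneg: "s < 0" using rspos by (simp add: zero_less_mult_iff)
    have el: "\<forall>x\<in>set ms. x = (Am, r) \<or> x = (Bt, r)"
    proof
      fix x assume x: "x \<in> set ms"
      obtain k c where kc: "x = (k,c)" by force
      have "c < 0" using neg x kc by auto
      then show "x = (Am, r) \<or> x = (Bt, r)" using fr x kc True by (auto simp: ch_def split: if_splits)
    qed
    have "\<forall>x\<in>set ms. snd x = r" using el by auto
    then have "mono_level ms = - r * int (length ms)" using level_const[of ms r] by blast
    then have "r * s = r * (- int (length ms))" using lv unfolding LL_def by simp
    then have "s = - int (length ms)" using rnz mult_cancel_left by blast
    then have len: "length ms = nat (-s)" by simp
    have len1: "length ms - 1 = nat (-s - 1)" using len sneg by simp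
    have ms12: "ms1 = replicate (nat (-s)) (Am, r)" "ms2 = (Bt, r) # replicate (nat (-s - 1)) (Am, r)"
      using True by (auto simp: ms1_def ms2_def)
    show ?thesis using reorder[OF True, of Am Bt ms] el m0 m1 m2 ms12 len len1 by auto
  next
    case False
    then have rpos: "r > 0" using rnz by simp
    then have spos: "s > 0" using rspos by (simp add: zero_less_mult_iff)
    have el: "\<forall>x\<in>set ms. x = (Ap, -r) \<or> x = (Cg, -r)"
    proof
      fix x assume x: "x \<in> set ms"
      obtain k c where kc: "x = (k,c)" by force
      have "c < 0" using neg x kc by auto
      then show "x = (Ap, -r) \<or> x = (Cg, -r)" using fr x kc rpos by (auto simp: ch_def split: if_splits)
    qed
    have "\<forall>x\<in>set ms. snd x = -r" using el by auto
    then have "mono_level ms = r * int (length ms)" using level_const[of ms "-r"] by simp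
    then have "r * s = r * int (length ms)" using lv unfolding LL_def by simp
    then have "s = int (length ms)" using rnz by simp
    then have len: "length ms = nat s" by simp
    have len1: "length ms - 1 = nat (s - 1)" using len spos by simp
    have ms12: "ms1 = replicate (nat s) (Ap, -r)" "ms2 = (Cg, -r) # replicate (nat (s - 1)) (Ap, -r)"
      using False by (auto simp: ms1_def ms2_def)
    have rn: "-r < 0" using rpos by simp
    show ?thesis using reorder[OF rn, of Ap Cg ms] el m0 m1 m2 ms12 len len1 by auto
  qed
qed


lemma main:
  assumes ev: "Lhat v = sc (of_int LL) v" and dv: "d0 sc op p pphi v = 0"
  shows "\<exists>a b. \<exists>w. Lhat w = sc (of_int LL) w \<and>
     v = sc a (mono op vac ms1) + sc b (mono op vac ms2) + d0 sc op p pphi w"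
proof -
  obtain t rr ms where t: "finite t" "v = (\<Sum>a\<in>t. sc (rr a) a)"
    and tms: "\<forall>a\<in>t. a = mono op vac (ms a) \<and> creation_list (ms a) \<and> of_int (mono_level (ms a)) = (of_int LL :: complex)"
    using rep[OF ev] by blast
  have lv: "\<forall>a\<in>t. mono_level (ms a) = LL" using tms of_int_eq_iff by blast
  define u where "u a = sc (rr a) a" for a
  define q where "q a = Qm (ms a)" for a
  have v: "v = sum u t" using t(2) by (simp add: u_def)
  have Nu: "\<forall>a\<in>t. NF (u a) = sc (q a) (u a)"
  proof
    fix a assume a: "a \<in> t"
    have "\<forall>x\<in>set (ms a). - snd x \<le> LL" using level_ge tms lv a by metis
    then have "NF a = sc (q a) a" using NF_mono tms a unfolding q_def by metis
    then show "NF (u a) = sc (q a) (u a)" by (simp add: u_def mult.commute)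
  qed
  have Lu: "\<forall>a\<in>t. Lhat (u a) = sc (of_int LL) (u a)"
  proof
    fix a assume a: "a \<in> t"
    have "Lhat a = sc (of_int LL) a" using L_mono tms lv a by metis
    then show "Lhat (u a) = sc (of_int LL) (u a)" by (simp add: u_def mult.commute)
  qed
  have dFv: "dF v = 0" using d_eq[OF ev] dv by simp
  define vq where "vq q0 = (\<Sum>a\<in>{a\<in>t. q a = q0}. u a)" for q0
  have dvq: "dF (vq q0) = 0" for q0
  proof -
    have ev2: "\<forall>a\<in>t. NF (dF (u a)) = sc (q a) (dF (u a))"
      using Nu by (simp add: dF_NF[symmetric])
    have s0: "(\<Sum>a\<in>t. dF (u a)) = 0" using dFv v by (simp add: dF_sum)
    have "(\<Sum>a\<in>t. dF (u a)) = (\<Sum>a\<in>{a\<in>t. q a = q0}. dF (u a))"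
      by (rule eigproj[OF vs_ax NF_sc NF_add t(1) ev2]) (simp add: s0)
    then show ?thesis using s0 by (simp add: vq_def dF_sum)
  qed
  have Nvq: "NF (vq q0) = sc q0 (vq q0)" for q0
    using Nu by (simp add: vq_def NF_sum vs.scale_sum_right)
  have Lvq: "Lhat (vq q0) = sc (of_int LL) (vq q0)" for q0
    unfolding vq_def using Lu vs.subspace_sum[OF Eig_sub[of "of_int LL"], of "{a\<in>t. q a = q0}" u] by auto
  define Qs where "Qs = q ` t"
  have finQ: "finite Qs" using t(1) by (simp add: Qs_def)
  have vsum: "v = (\<Sum>q0\<in>Qs. vq q0)" unfolding v vq_def Qs_def by (rule sum.image_gen[OF t(1)])
  define w where "w = (\<Sum>q0\<in>Qs - {0}. sc (1 / q0) (HF (vq q0)))"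
  have dFw: "dF w = (\<Sum>q0\<in>Qs - {0}. vq q0)"
  proof -
    have "dF w = (\<Sum>q0\<in>Qs - {0}. sc (1 / q0) (dF (HF (vq q0))))" by (simp add: w_def dF_sum)
    also have "\<dots> = (\<Sum>q0\<in>Qs - {0}. vq q0)"
    proof (rule sum.cong[OF refl])
      fix q0 assume "q0 \<in> Qs - {0}"
      then have q0: "q0 \<noteq> 0" by simp
      have "dF (HF (vq q0)) = NF (vq q0)" using homotopy[of "vq q0"] dvq[of q0] by simp
      then show "sc (1 / q0) (dF (HF (vq q0))) = vq q0" using q0 by (simp add: Nvq)
    qed
    finally show ?thesis .
  qed
  have Lw: "Lhat w = sc (of_int LL) w"
    unfolding w_def using vs.subspace_sum[OF Eig_sub[of "of_int LL"], of "Qs - {0}" "\<lambda>q0. sc (1 / q0) (HF (vq q0))"]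
      HF_eig[OF Lvq] by (auto simp: mult.commute)
  have dw: "d0 sc op p pphi w = dF w" by (rule d_eq[OF Lw])
  have split: "v = (\<Sum>q0\<in>Qs \<inter> {0}. vq q0) + (\<Sum>q0\<in>Qs - {0}. vq q0)"
    using vsum sum.Int_Diff[OF finQ, of vq "{0}"] by simp
  have v0: "vq 0 \<in> PP"
    unfolding vq_def
  proof (rule vs.subspace_sum[OF PP_sub])
    fix a assume a: "a \<in> {a\<in>t. q a = 0}"
    then have "\<forall>x\<in>set (ms a). ch (fst x) (snd x) = 0" using Qm_zero unfolding q_def by blast
    then have "mono op vac (ms a) \<in> PP" using free_span tms lv a by blast
    then have "a \<in> PP" using tms a by auto
    then show "u a \<in> PP" unfolding u_def using vs.subspace_scale[OF PP_sub] by blast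
  qed
  have p0: "(\<Sum>q0\<in>Qs \<inter> {0}. vq q0) \<in> PP"
  proof (cases "0 \<in> Qs")
    case True
    then have "Qs \<inter> {0} = {0}" by auto
    then show ?thesis using v0 by simp
  next
    case False
    then have "Qs \<inter> {0} = {}" by auto
    then show ?thesis using vs.subspace_0[OF PP_sub] by simp
  qed
  then obtain a b where ab: "(\<Sum>q0\<in>Qs \<inter> {0}. vq q0) = sc a (mono op vac ms1) + sc b (mono op vac ms2)"
    unfolding PP_def by blast
  have "v = sc a (mono op vac ms1) + sc b (mono op vac ms2) + d0 sc op p pphi w"
    using split ab dw dFw by simp
  then show ?thesis using Lw by blast
qed


lemma D_free: assumes cr: "creation_list ms" and fr: "\<forall>x\<in>set ms. ch (fst x) (snd x) = 0" and n: "n \<noteq> 0"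
  shows "D n (mono op vac ms) = 0"
proof -
  have n': "-n \<noteq> 0" using n by simp
  have neg: "\<forall>x\<in>set ms. snd x < 0" using cr by (simp add: creation_list_def)
  have el: "\<forall>x\<in>set ms. fst x = Ap \<and> snd x = -r \<or> fst x = Cg \<and> snd x = -r \<or> fst x = Am \<and> snd x = r \<or> fst x = Bt \<and> snd x = r"
    using fr by (auto simp: ch_def split: if_splits)
  have t2: "op Et n (op Be (-n) (mono op vac ms)) = 0"
  proof (cases "n > 0")
    case True
    have "op Et n (mono op vac ((Be, -n) # ms)) = 0"
      by (rule annih) (use True cr el in \<open>auto simp: bracket_def\<close>)
    then show ?thesis by simp
  next
    case False
    then have "-n > 0" using n by simp
    then have "op Be (-n) (mono op vac ms) = 0"
      by (rule annih) (use cr el in \<open>auto simp: bracket_def\<close>)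
    then show ?thesis using n by simp
  qed
  have t1: "sc (Pp p pphi n) (op Cg (-n) (op Am n (mono op vac ms))) = 0"
  proof (cases "n = r")
    case True
    then show ?thesis by (simp add: Pr)
  next
    case nr: False
    show ?thesis
    proof (cases "n > 0")
      case True
      have "op Am n (mono op vac ms) = 0"
        by (rule annih) (use True cr el nr in \<open>auto simp: bracket_def\<close>)
      then show ?thesis using n by simp
    next
      case False
      then have "-n > 0" using n by simp
      have "op Cg (-n) (mono op vac ((Am, n) # ms)) = 0"
        by (rule annih) (use \<open>-n > 0\<close> False n cr el nr in \<open>auto simp: bracket_def\<close>)
      then show ?thesis by simp
    qed
  qed
  show ?thesis using t1 t2 by (simp add: d0_term_def)
qed

lemma d_free: "creation_list ms \<Longrightarrow> \<forall>x\<in>set ms. ch (fst x) (snd x) = 0 \<Longrightarrow> d0 sc op p pphi (mono op vac ms) = 0"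
  using D_free by (simp add: d0_def)

end

lemma level_rep: "mono_level (replicate n (k, i)) = - i * int n"
  by (induct n) (auto simp: algebra_simps)

lemma ghost_rep: "mono_ghost (replicate n (k, i)) = ghost_charge k * int n"
  by (induct n) (auto simp: mono_ghost_def algebra_simps)

lemma ghost_Cons: "mono_ghost ((k, i) # ms) = ghost_charge k + mono_ghost ms"
  by (simp add: mono_ghost_def)

lemma creation_rep: "i < 0 \<Longrightarrow> creation_list (replicate n (k, i))"
  by (simp add: creation_list_def)

theorem theorem4:
  fixes sc :: "complex \<Rightarrow> 'v::ab_group_add \<Rightarrow> 'v"
    and op :: "mode \<Rightarrow> int \<Rightarrow> 'v \<Rightarrow> 'v"
    and vac :: 'v
    and Lhat :: "'v \<Rightarrow> 'v"
    and p pphi :: complex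
    and r s :: int
  assumes fock: "is_fock_space sc op vac Lhat"
    and rs: "r \<noteq> 0" "s \<noteq> 0"
    and Pr: "Pp p pphi r = 0"
    and Ps: "Pm p pphi s = 0"
  defines "K \<equiv> kerL0 sc Lhat p pphi"
    and "d \<equiv> d0 sc op p pphi"
  shows
    "(r * s < 0 \<longrightarrow> (\<forall>v \<in> K. d v = 0 \<longrightarrow> (\<exists>w \<in> K. v = d w)))
   \<and> (r < 0 \<and> s < 0 \<longrightarrow>
       (let ms1 = replicate (nat (-s)) (Am, r);
            ms2 = (Bt, r) # replicate (nat (-s - 1)) (Am, r);
            S1 = mono op vac ms1; S2 = mono op vac ms2
        in mono_ghost ms1 = 0 \<and> mono_ghost ms2 = -1
         \<and> S1 \<in> K \<and> S2 \<in> K \<and> d S1 = 0 \<and> d S2 = 0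
         \<and> (\<forall>v \<in> K. d v = 0 \<longrightarrow>
              (\<exists>a b. \<exists>w \<in> K. v = sc a S1 + sc b S2 + d w))))
   \<and> (r > 0 \<and> s > 0 \<longrightarrow>
       (let ms1 = replicate (nat s) (Ap, -r);
            ms2 = (Cg, -r) # replicate (nat (s - 1)) (Ap, -r);
            S1 = mono op vac ms1; S2 = mono op vac ms2
        in mono_ghost ms1 = 0 \<and> mono_ghost ms2 = 1
         \<and> S1 \<in> K \<and> S2 \<in> K \<and> d S1 = 0 \<and> d S2 = 0
         \<and> (\<forall>v \<in> K. d v = 0 \<longrightarrow>
              (\<exists>a b. \<exists>w \<in> K. v = sc a S1 + sc b S2 + d w))))"
proof -
  interpret fk sc op vac Lhat using fock by (simp add: fk_def)
  interpret fk1 sc op vac Lhat p pphi r s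
    by (unfold_locales) (use rs Pr Ps in auto)
  have Kc: "\<And>v. v \<in> K \<longleftrightarrow> Lhat v = sc (of_int (r * s)) v" unfolding K_def by (rule K_iff)
  have d00: "d 0 = 0" unfolding d_def by (simp add: d0_def d0_term_def)
  have part1: "r * s < 0 \<longrightarrow> (\<forall>v \<in> K. d v = 0 \<longrightarrow> (\<exists>w \<in> K. v = d w))"
  proof (intro impI ballI)
    fix v assume neg: "r * s < 0" and v: "v \<in> K" and "d v = 0"
    have "v = 0" using eig_neg v neg Kc by blast
    moreover have "(0::'v) \<in> K" using Kc by simp
    ultimately show "\<exists>w \<in> K. v = d w" using d00 by metis
  qed
  have part2: "r < 0 \<and> s < 0 \<longrightarrow>
       (let ms1 = replicate (nat (-s)) (Am, r);
            ms2 = (Bt, r) # replicate (nat (-s - 1)) (Am, r);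
            S1 = mono op vac ms1; S2 = mono op vac ms2
        in mono_ghost ms1 = 0 \<and> mono_ghost ms2 = -1
         \<and> S1 \<in> K \<and> S2 \<in> K \<and> d S1 = 0 \<and> d S2 = 0
         \<and> (\<forall>v \<in> K. d v = 0 \<longrightarrow>
              (\<exists>a b. \<exists>w \<in> K. v = sc a S1 + sc b S2 + d w)))"
  proof (intro impI)
    assume rsn: "r < 0 \<and> s < 0"
    then have rsp: "r * s > 0" by (simp add: mult_neg_neg)
    interpret fk2 sc op vac Lhat p pphi r s by (unfold_locales) (rule rsp)
    define l1 where "l1 = replicate (nat (-s)) (Am, r)"
    define l2 where "l2 = (Bt, r) # replicate (nat (-s - 1)) (Am, r)"
    have e1: "ms1 = l1" "ms2 = l2" using rsn by (simp_all add: ms1_def ms2_def l1_def l2_def)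
    have c1: "creation_list l1" "creation_list l2" using rsn by (simp_all add: l1_def l2_def creation_rep)
    have lv1: "mono_level l1 = r * s" using rsn by (simp add: l1_def level_rep)
    have lv2: "mono_level l2 = r * s" using rsn by (simp add: l2_def level_rep algebra_simps)
    have f1: "\<forall>x\<in>set l1. ch (fst x) (snd x) = 0" by (simp add: l1_def ch_def)
    have f2: "\<forall>x\<in>set l2. ch (fst x) (snd x) = 0" by (simp add: l2_def ch_def)
    have g: "mono_ghost l1 = 0" "mono_ghost l2 = -1" by (simp_all add: l1_def l2_def ghost_rep ghost_Cons)
    have K1: "mono op vac l1 \<in> K" "mono op vac l2 \<in> K" using Kc L_mono c1 lv1 lv2 by simp_all
    have D1: "d (mono op vac l1) = 0" "d (mono op vac l2) = 0"
      unfolding d_def using d_free c1 f1 f2 by simp_all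
    have M: "\<forall>v \<in> K. d v = 0 \<longrightarrow> (\<exists>a b. \<exists>w \<in> K. v = sc a (mono op vac l1) + sc b (mono op vac l2) + d w)"
    proof (intro ballI impI)
      fix v assume "v \<in> K" "d v = 0"
      then obtain a b w where "Lhat w = sc (of_int LL) w" "v = sc a (mono op vac ms1) + sc b (mono op vac ms2) + d0 sc op p pphi w"
        using main Kc unfolding d_def LL_def by blast
      then show "\<exists>a b. \<exists>w \<in> K. v = sc a (mono op vac l1) + sc b (mono op vac l2) + d w"
        using Kc e1 unfolding d_def LL_def by blast
    qed
    show "let ms1 = replicate (nat (-s)) (Am, r);
            ms2 = (Bt, r) # replicate (nat (-s - 1)) (Am, r);
            S1 = mono op vac ms1; S2 = mono op vac ms2
        in mono_ghost ms1 = 0 \<and> mono_ghost ms2 = -1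
         \<and> S1 \<in> K \<and> S2 \<in> K \<and> d S1 = 0 \<and> d S2 = 0
         \<and> (\<forall>v \<in> K. d v = 0 \<longrightarrow>
              (\<exists>a b. \<exists>w \<in> K. v = sc a S1 + sc b S2 + d w))"
      unfolding Let_def l1_def[symmetric] l2_def[symmetric] using g K1 D1 M by blast
  qed
  have part3: "r > 0 \<and> s > 0 \<longrightarrow>
       (let ms1 = replicate (nat s) (Ap, -r);
            ms2 = (Cg, -r) # replicate (nat (s - 1)) (Ap, -r);
            S1 = mono op vac ms1; S2 = mono op vac ms2
        in mono_ghost ms1 = 0 \<and> mono_ghost ms2 = 1
         \<and> S1 \<in> K \<and> S2 \<in> K \<and> d S1 = 0 \<and> d S2 = 0
         \<and> (\<forall>v \<in> K. d v = 0 \<longrightarrow>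
              (\<exists>a b. \<exists>w \<in> K. v = sc a S1 + sc b S2 + d w)))"
  proof (intro impI)
    assume rsn: "r > 0 \<and> s > 0"
    then have rsp: "r * s > 0" by simp
    interpret fk2 sc op vac Lhat p pphi r s by (unfold_locales) (rule rsp)
    define l1 where "l1 = replicate (nat s) (Ap, -r)"
    define l2 where "l2 = (Cg, -r) # replicate (nat (s - 1)) (Ap, -r)"
    have e1: "ms1 = l1" "ms2 = l2" using rsn by (simp_all add: ms1_def ms2_def l1_def l2_def)
    have c1: "creation_list l1" "creation_list l2" using rsn by (simp_all add: l1_def l2_def creation_rep)
    have lv1: "mono_level l1 = r * s" using rsn by (simp add: l1_def level_rep)
    have lv2: "mono_level l2 = r * s" using rsn by (simp add: l2_def level_rep algebra_simps)
    have f1: "\<forall>x\<in>set l1. ch (fst x) (snd x) = 0" by (simp add: l1_def ch_def)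
    have f2: "\<forall>x\<in>set l2. ch (fst x) (snd x) = 0" by (simp add: l2_def ch_def)
    have g: "mono_ghost l1 = 0" "mono_ghost l2 = 1" by (simp_all add: l1_def l2_def ghost_rep ghost_Cons)
    have K1: "mono op vac l1 \<in> K" "mono op vac l2 \<in> K" using Kc L_mono c1 lv1 lv2 by simp_all
    have D1: "d (mono op vac l1) = 0" "d (mono op vac l2) = 0"
      unfolding d_def using d_free c1 f1 f2 by simp_all
    have M: "\<forall>v \<in> K. d v = 0 \<longrightarrow> (\<exists>a b. \<exists>w \<in> K. v = sc a (mono op vac l1) + sc b (mono op vac l2) + d w)"
    proof (intro ballI impI)
      fix v assume "v \<in> K" "d v = 0"
      then obtain a b w where "Lhat w = sc (of_int LL) w" "v = sc a (mono op vac ms1) + sc b (mono op vac ms2) + d0 sc op p pphi w"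
        using main Kc unfolding d_def LL_def by blast
      then show "\<exists>a b. \<exists>w \<in> K. v = sc a (mono op vac l1) + sc b (mono op vac l2) + d w"
        using Kc e1 unfolding d_def LL_def by blast
    qed
    show "let ms1 = replicate (nat s) (Ap, -r);
            ms2 = (Cg, -r) # replicate (nat (s - 1)) (Ap, -r);
            S1 = mono op vac ms1; S2 = mono op vac ms2
        in mono_ghost ms1 = 0 \<and> mono_ghost ms2 = 1
         \<and> S1 \<in> K \<and> S2 \<in> K \<and> d S1 = 0 \<and> d S2 = 0
         \<and> (\<forall>v \<in> K. d v = 0 \<longrightarrow>
              (\<exists>a b. \<exists>w \<in> K. v = sc a S1 + sc b S2 + d w))"
      unfolding Let_def l1_def[symmetric] l2_def[symmetric] using g K1 D1 M by blast
  qed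
  show ?thesis using part1 part2 part3 by blast
qed

end
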